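(* Let $\phi:[-2,0]\to\mathbb{R}$ be a function such that the ranges of $\phi|_{[-2,-1]}$ and of $\phi|_{[-1,0]}$ both equal $[-10,10]$ and $\phi(0)=0$. Consider the problem of minimizing \[ \int_0^1 |x(t)-2t|^2+u(t)\,\mathrm{d}t+4|x(1)-2| \] over pairs $(x,u)$ with $u\in L^\infty(0,1)$, $-1\le u(t)\le 3$ for a.e. $t\in(0,1)$, and $x\in C([-2,1])\cap W^{1,\infty}(0,1)$ satisfying \[ x'(t)=\frac1{10}\max_{s\in[t-2,t]}\big(u(t)\,x(s)\big)\ \text{ for a.e. } t\in(0,1),\qquad x(t)=\phi(t)\ \text{ for } t\in[-2,0]. \] Then this problem does not possess a solution. *)

theory Defs
  imports "HOL-Analysis.Analysis"
begin

text \<open>Admissible pairs (x,u) for the delay control problem with initial datum phi.\<close>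
definition admissible :: "(real \<Rightarrow> real) \<Rightarrow> (real \<Rightarrow> real) \<Rightarrow> (real \<Rightarrow> real) \<Rightarrow> bool" where
  "admissible \<phi> x u \<longleftrightarrow>
     u \<in> borel_measurable (lebesgue_on {0<..<1}) \<and>
     (AE t in lebesgue_on {0<..<1}. -1 \<le> u t \<and> u t \<le> 3) \<and>
     continuous_on {-2..1} x \<and>
     (\<exists>L. L-lipschitz_on {0<..<1} x) \<and>
     (AE t in lebesgue_on {0<..<1}.
        (x has_real_derivative (1/10 * Sup ((\<lambda>s. u t * x s) ` {t-2..t}))) (at t)) \<and>
     (\<forall>t\<in>{-2..0}. x t = \<phi> t)"

text \<open>Cost functional.\<close>
definition cost :: "(real \<Rightarrow> real) \<Rightarrow> (real \<Rightarrow> real) \<Rightarrow> real" where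
  "cost x u = integral\<^sup>L (lebesgue_on {0<..<1}) (\<lambda>t. \<bar>x t - 2 * t\<bar>^2 + u t) + 4 * \<bar>x 1 - 2\<bar>"

end

theory Submission
  imports Defs
begin

lemma measure_image_real:
  fixes g d :: "real \<Rightarrow> real"
  assumes S: "S \<in> sets lebesgue"
    and der: "\<And>x. x \<in> S \<Longrightarrow> (g has_real_derivative d x) (at x within S)"
    and int: "(\<lambda>x. \<bar>d x\<bar>) integrable_on S"
  shows "g ` S \<in> lmeasurable \<and> measure lebesgue (g ` S) \<le> integral S (\<lambda>x. \<bar>d x\<bar>)"
proof -
  let ?lift = "vec :: real \<Rightarrow> real^1"
  let ?drop = "(\<lambda>x::real^1. x $ 1)"
  let ?G = "\<lambda>v::real^1. ?lift (g (v $ 1))"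
  have S': "?lift ` S \<in> sets lebesgue"
    by (auto intro: differentiable_image_in_sets_lebesgue [OF S] differentiable_vec)
  have "((\<lambda>x. vec (g (x $ 1))) has_derivative (*\<^sub>R) (d z)) (at (vec z) within ?lift ` S)"
    if "z \<in> S" for z
    using der [OF that]
    by (simp add: has_real_derivative_iff_has_vector_derivative has_vector_derivative_def has_derivative_vector_1)
  then have der': "\<And>x. x \<in> ?lift ` S \<Longrightarrow>
        (?G has_derivative (*\<^sub>R) (d (?drop x))) (at x within ?lift ` S)"
    by auto
  have det: "det (matrix ((*\<^sub>R) (d (?drop x))) :: real^1^1) = d (?drop x)" for x
    by simp
  have eqS: "?drop ` ?lift ` S = S" by (force simp: image_image)
  obtain I where I: "((\<lambda>x. \<bar>d x\<bar>) has_integral I) S" using int by blast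
  then have "(((\<lambda>v::real^1. \<bar>d (v $ 1)\<bar>) \<circ> vec) has_integral I) (?drop ` ?lift ` S)"
    by (simp add: eqS o_def)
  then have I': "((\<lambda>v::real^1. \<bar>d (v $ 1)\<bar>) has_integral I) (?lift ` S)"
    by (rule has_integral_vec1_D)
  have int': "(\<lambda>x. \<bar>det (matrix ((*\<^sub>R) (d (?drop x))) :: real^1^1)\<bar>) integrable_on ?lift ` S"
    using I' by (auto simp: det)
  have M: "?G ` ?lift ` S \<in> lmeasurable"
    and M2: "measure lebesgue (?G ` ?lift ` S) \<le> integral (?lift ` S) (\<lambda>x. \<bar>det (matrix ((*\<^sub>R) (d (?drop x))) :: real^1^1)\<bar>)"
    using measurable_differentiable_image[OF S' der' int'] measure_differentiable_image[OF S' der' int'] by auto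
  have "integral (?lift ` S) (\<lambda>x. \<bar>det (matrix ((*\<^sub>R) (d (?drop x))) :: real^1^1)\<bar>) = I"
    using I' by (simp add: det integral_unique)
  with M2 have M3: "measure lebesgue (?G ` ?lift ` S) \<le> I" by simp
  have "((\<lambda>x. 1::real) has_integral measure lebesgue (?G ` ?lift ` S)) (?G ` ?lift ` S)"
    using M lmeasurable_iff_integrable_on lmeasure_integral
    by (metis integrable_integral)
  then have "(((\<lambda>x::real^1. 1::real) \<circ> vec) has_integral measure lebesgue (?G ` ?lift ` S)) (?drop ` ?G ` ?lift ` S)"
    by (rule has_integral_vec1_I[where f="\<lambda>x::real^1. 1::real"])
  moreover have "?drop ` ?G ` ?lift ` S = g ` S" by (force simp: image_image)
  ultimately have H: "((\<lambda>x. 1::real) has_integral measure lebesgue (?G ` ?lift ` S)) (g ` S)"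
    by (simp add: o_def)
  then have gm: "g ` S \<in> lmeasurable" using lmeasurable_iff_integrable_on by blast
  have "measure lebesgue (g ` S) = measure lebesgue (?G ` ?lift ` S)"
    using H gm lmeasure_integral integral_unique by metis
  with M3 I show ?thesis using gm integral_unique by metis
qed

lemma measure_Icc_lebesgue: "a \<le> b \<Longrightarrow> measure lebesgue {a..b::real} = b - a"
  by (simp add: lmeasure_integral)

lemma abs_incr_bound:
  fixes f d :: "real \<Rightarrow> real"
  assumes ab: "a \<le> b" and cont: "continuous_on {a..b} f" and lip: "K-lipschitz_on {a<..<b} f"
    and G: "G \<in> sets lebesgue" "G \<subseteq> {a<..<b}" "negligible ({a<..<b} - G)"
    and der: "\<And>t. t \<in> G \<Longrightarrow> (f has_real_derivative d t) (at t)"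
    and int: "(\<lambda>t. \<bar>d t\<bar>) integrable_on G"
  shows "\<bar>f b - f a\<bar> \<le> integral G (\<lambda>t. \<bar>d t\<bar>)"
proof -
  have seg: "closed_segment (f a) (f b) \<subseteq> f ` {a..b}"
  proof
    fix y assume "y \<in> closed_segment (f a) (f b)"
    moreover have "continuous_on (closed_segment a b) f"
      using cont ab by (simp add: closed_segment_eq_real_ivl1)
    ultimately obtain x where "x \<in> closed_segment a b" "f x = y"
      using IVT'_closed_segment_real by blast
    then show "y \<in> f ` {a..b}" using ab by (auto simp: closed_segment_eq_real_ivl1)
  qed
  define Z where "Z = f ` ({a<..<b} - G) \<union> {f a, f b}"
  have negZ1: "negligible (f ` ({a<..<b} - G))"
  proof (rule negligible_locally_Lipschitz_image)
    show "DIM(real) \<le> DIM(real)" by simp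
    show "negligible ({a<..<b} - G)" by fact
    fix x assume x: "x \<in> {a<..<b} - G"
    show "\<exists>T B. open T \<and> x \<in> T \<and> (\<forall>y\<in>({a<..<b} - G) \<inter> T. norm (f y - f x) \<le> B * norm (y - x))"
    proof (intro exI conjI ballI)
      show "open (UNIV::real set)" by simp
      show "x \<in> UNIV" by simp
      fix y assume "y \<in> ({a<..<b} - G) \<inter> UNIV"
      then show "norm (f y - f x) \<le> K * norm (y - x)"
        using lipschitz_onD[OF lip, of y x] x by (auto simp: dist_real_def)
    qed
  qed
  have negZ: "negligible Z" unfolding Z_def
    by (rule negligible_Un[OF negZ1]) (simp add: negligible_finite)
  have sub: "f ` {a..b} \<subseteq> f ` G \<union> Z"
  proof
    fix y assume "y \<in> f ` {a..b}"
    then obtain t where t: "t \<in> {a..b}" "y = f t" by blast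
    show "y \<in> f ` G \<union> Z"
    proof (cases "t = a \<or> t = b")
      case True then show ?thesis using t unfolding Z_def by auto
    next
      case False
      then have "t \<in> {a<..<b}" using t by auto
      then show ?thesis using t unfolding Z_def by (cases "t \<in> G") auto
    qed
  qed
  have L: "f ` G \<in> lmeasurable" "measure lebesgue (f ` G) \<le> integral G (\<lambda>t. \<bar>d t\<bar>)"
    using measure_image_real[OF G(1) _ int, of f] der
    by (auto intro: has_field_derivative_at_within)
  have Zm: "Z \<in> lmeasurable" using negZ negligible_imp_measurable by blast
  have "\<bar>f b - f a\<bar> = measure lebesgue (closed_segment (f a) (f b))"
    by (auto simp: closed_segment_eq_real_ivl measure_Icc_lebesgue)
  also have "\<dots> \<le> measure lebesgue (f ` G \<union> Z)"
    apply (rule measure_mono_fmeasurable)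
    using seg sub apply blast
    apply (simp add: closed_segment_eq_real_ivl)
    using L(1) Zm by blast
  also have "\<dots> \<le> measure lebesgue (f ` G) + measure lebesgue Z"
    using L(1) Zm by (intro measure_Un_le) auto
  also have "\<dots> = measure lebesgue (f ` G)"
    using negZ negligible_imp_measure0 by simp
  finally show ?thesis using L(2) by linarith
qed

lemma sup_lemma:
  fixes \<phi> z :: "real \<Rightarrow> real"
  assumes h1: "\<phi> ` {-2..-1} = {-10..10}" and h2: "\<phi> ` {-1..0} = {-10..10}"
    and z\<phi>: "\<And>s. s \<in> {-2..0} \<Longrightarrow> z s = \<phi> s" and zb: "\<And>s. s \<in> {0..t} \<Longrightarrow> \<bar>z s\<bar> \<le> 10"
    and t: "0 \<le> t" "t \<le> 1"
  shows "Sup ((\<lambda>s. c * z s) ` {t-2..t}) = 10 * \<bar>c\<bar>"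
proof (rule cSup_eq_maximum)
  have b: "\<bar>z s\<bar> \<le> 10" if "s \<in> {t-2..t}" for s
  proof (cases "s \<le> 0")
    case True
    then have "s \<in> {-2..-1} \<or> s \<in> {-1..0}" using that t by auto
    then have "\<phi> s \<in> {-10..10}" using h1 h2 by blast
    then show ?thesis using z\<phi>[of s] True that t by auto
  next
    case False then show ?thesis using zb[of s] that by auto
  qed
  show "x \<le> 10 * \<bar>c\<bar>" if xx: "x \<in> (\<lambda>s. c * z s) ` {t-2..t}" for x
  proof -
    obtain s where s: "s \<in> {t-2..t}" "x = c * z s" using xx by blast
    have "c * z s \<le> \<bar>c\<bar> * \<bar>z s\<bar>" by (metis abs_ge_self abs_mult)
    also have "\<dots> \<le> \<bar>c\<bar> * 10" using b[OF s(1)] by (simp add: mult_left_mono)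
    finally show ?thesis using s by simp
  qed
  have "(10::real) \<in> \<phi> ` {-1..0}" using h2 by simp
  then obtain p where p: "p \<in> {-1..0}" "\<phi> p = 10" by (auto simp del: atLeastAtMost_iff)
  have "(-10::real) \<in> \<phi> ` {-1..0}" using h2 by simp
  then obtain q where q: "q \<in> {-1..0}" "\<phi> q = -10" by (auto simp del: atLeastAtMost_iff)
  show "10 * \<bar>c\<bar> \<in> (\<lambda>s. c * z s) ` {t-2..t}"
  proof (cases "c \<ge> 0")
    case True
    have "c * z p = 10 * \<bar>c\<bar>" using p z\<phi>[of p] True by auto
    moreover have "p \<in> {t-2..t}" using p t by auto
    ultimately show ?thesis by force
  next
    case False
    have "c * z q = 10 * \<bar>c\<bar>" using q z\<phi>[of q] False by auto
    moreover have "q \<in> {t-2..t}" using q t by auto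
    ultimately show ?thesis by force
  qed
qed

definition ww :: "nat \<Rightarrow> real \<Rightarrow> real" where
  "ww n t = arccos (cos (2*pi*real n*t)) / (2*pi*real n)"

lemma ww_cont: assumes "n \<ge> 1" shows "continuous_on A (ww n)"
  unfolding ww_def using assms by (intro continuous_intros) auto

lemma ww_bounds: assumes "n \<ge> 1" shows "0 \<le> ww n t" "ww n t \<le> 1/(2*real n)"
proof -
  have a: "0 \<le> arccos (cos (2*pi*real n*t))" "arccos (cos (2*pi*real n*t)) \<le> pi"
    by (auto intro: arccos_lbound arccos_ubound)
  have p: "2*pi*real n > 0" using assms pi_gt_zero by auto
  show "0 \<le> ww n t" unfolding ww_def using a p by auto
  have "arccos (cos (2*pi*real n*t)) / (2*pi*real n) \<le> pi / (2*pi*real n)"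
    using a p by (intro divide_right_mono) auto
  also have "\<dots> = 1/(2*real n)" using pi_gt_zero by (simp add: field_simps)
  finally show "ww n t \<le> 1/(2*real n)" unfolding ww_def .
qed

lemma ww_0: "ww n 0 = 0" by (simp add: ww_def)

lemma ww_1: "ww n 1 = 0"
proof -
  have "cos (2*pi*real n*1) = 1"
    using cos_int_2pin[of "int n"] by simp
  then show ?thesis by (simp add: ww_def)
qed

lemma ww_deriv:
  assumes n: "n \<ge> 1" and s: "sin (2*pi*real n*t) \<noteq> 0"
  shows "(ww n has_real_derivative sgn (sin (2*pi*real n*t))) (at t)"
proof -
  let ?c = "2*pi*real n"
  have c: "?c > 0" using n pi_gt_zero by auto
  have sc: "(sin (?c*t))\<^sup>2 + (cos (?c*t))\<^sup>2 = 1" by simp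
  have cl: "-1 < cos (?c*t)" "cos (?c*t) < 1"
  proof -
    have "(sin (?c*t))\<^sup>2 > 0" using s by simp
    then have "(cos (?c*t))\<^sup>2 < 1" using sc by linarith
    then have "\<bar>cos (?c*t)\<bar> < 1" by (simp add: abs_square_less_1)
    then show "-1 < cos (?c*t)" "cos (?c*t) < 1" by linarith+
  qed
  have d1: "((\<lambda>t. cos (?c*t)) has_real_derivative (-sin(?c*t) * ?c)) (at t)"
    by (auto intro!: derivative_eq_intros)
  have d2: "((\<lambda>t. arccos (cos (?c*t))) has_real_derivative
        (inverse (- sqrt (1 - (cos (?c*t))\<^sup>2)) * (-sin(?c*t) * ?c))) (at t)"
    using DERIV_chain2[OF DERIV_arccos[OF cl] d1] .
  have d3: "(ww n has_real_derivative
        (inverse (- sqrt (1 - (cos (?c*t))\<^sup>2)) * (-sin(?c*t) * ?c)) / ?c) (at t)"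
    unfolding ww_def using DERIV_cdivide[OF d2, of ?c] .
  have "sqrt (1 - (cos (?c*t))\<^sup>2) = \<bar>sin (?c*t)\<bar>"
    using sc by (metis add_diff_cancel_right' real_sqrt_abs)
  then have "(inverse (- sqrt (1 - (cos (?c*t))\<^sup>2)) * (-sin(?c*t) * ?c)) / ?c = sgn (sin (?c*t))"
    using c s n by (simp add: field_simps sgn_if)
  with d3 show ?thesis by simp
qed

lemma ww_zeros_finite:
  assumes n: "n \<ge> 1"
  shows "finite {t \<in> {a..b}. sin (2*pi*real n*t) = 0}"
proof -
  have "{t \<in> {a..b}. sin (2*pi*real n*t) = 0} \<subseteq>
        (\<lambda>i. real_of_int i / (2*real n)) ` {\<lfloor>2*real n*a\<rfloor>..\<lceil>2*real n*b\<rceil>}"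
  proof
    fix t assume t: "t \<in> {t \<in> {a..b}. sin (2*pi*real n*t) = 0}"
    then obtain i where i: "2*pi*real n*t = real_of_int i * pi" using sin_zero_iff_int2 by auto
    have "(2*real n*t) * pi = real_of_int i * pi" using i by (simp add: algebra_simps)
    then have ti: "2*real n*t = real_of_int i" by simp
    have "2*real n*a \<le> 2*real n*t" "2*real n*t \<le> 2*real n*b" using t n by auto
    then have "i \<in> {\<lfloor>2*real n*a\<rfloor>..\<lceil>2*real n*b\<rceil>}" using ti
      by (auto simp: floor_le_iff le_ceiling_iff)
    moreover have "t = real_of_int i / (2*real n)" using ti n by (auto simp: field_simps)
    ultimately show "t \<in> (\<lambda>i. real_of_int i / (2*real n)) ` {\<lfloor>2*real n*a\<rfloor>..\<lceil>2*real n*b\<rceil>}" by blast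
  qed
  then show ?thesis by (rule finite_subset) simp
qed

lemma ww_lip:
  assumes n: "n \<ge> 1"
  shows "\<bar>ww n b - ww n a\<bar> \<le> \<bar>b - a\<bar>"
proof -
  have *: "\<bar>ww n q - ww n p\<bar> \<le> q - p" if pq: "p \<le> q" for p q
  proof -
    have I: "((\<lambda>t. sgn (sin (2*pi*real n*t))) has_integral ww n q - ww n p) {p..q}"
    proof (rule fundamental_theorem_of_calculus_strong[OF ww_zeros_finite[OF n, of p q] pq])
      fix t assume "t \<in> {p..q} - {t \<in> {p..q}. sin (2*pi*real n*t) = 0}"
      then have "sin (2*pi*real n*t) \<noteq> 0" by auto
      then show "(ww n has_vector_derivative sgn (sin (2*pi*real n*t))) (at t)"
        using ww_deriv[OF n] has_real_derivative_iff_has_vector_derivative by blast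
    qed (rule ww_cont[OF n])
    have B: "\<And>x. x \<in> {p..q} - {} \<Longrightarrow> norm (sgn (sin (2*pi*real n*x))) \<le> (1::real)"
      by (simp add: sgn_if)
    have "norm (ww n q - ww n p) \<le> 1 * Henstock_Kurzweil_Integration.content {p..q}"
      by (rule has_integral_bound_real[where B=1 and S="{}", OF _ _ I B]) auto
    then show ?thesis using pq by simp
  qed
  show ?thesis
  proof (cases "a \<le> b")
    case True then show ?thesis using *[of a b] by simp
  next
    case False then show ?thesis using *[of b a] by simp
  qed
qed

lemma LI:
  fixes f :: "real \<Rightarrow> real"
  assumes m: "f \<in> borel_measurable (lebesgue_on {0<..<1})" and b: "\<And>t. t \<in> {0<..<1} \<Longrightarrow> \<bar>f t\<bar> \<le> B"
  shows "integrable (lebesgue_on {0<..<1}) f" "integral\<^sup>L (lebesgue_on {0<..<1}) f = integral {0..1} f"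
    "f integrable_on {0..1}"
proof -
  have lm: "{0<..<1::real} \<in> lmeasurable" by simp
  interpret finite_measure "lebesgue_on {0<..<1::real}" using finite_measure_lebesgue_on[OF lm] .
  show i: "integrable (lebesgue_on {0<..<1}) f"
    by (rule integrable_const_bound[where B=B]) (use b m in auto)
  have "integral\<^sup>L (lebesgue_on {0<..<1}) f = integral {0<..<1} f"
    by (rule lebesgue_integral_eq_integral[OF i]) simp
  also have "\<dots> = integral {0..1} f"
    by (rule integral_spike_set) (auto intro: negligible_subset[of "{0,1}"] simp: negligible_finite)
  finally show "integral\<^sup>L (lebesgue_on {0<..<1}) f = integral {0..1} f" .
  have "(f has_integral integral\<^sup>L (lebesgue_on {0<..<1}) f) {0<..<1}"
    by (rule has_integral_integral_lebesgue_on[OF i]) simp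
  then have "(f has_integral integral\<^sup>L (lebesgue_on {0<..<1}) f) {0..1}"
    by (subst has_integral_spike_set_eq[where T="{0<..<1}"])
       (auto intro: negligible_subset[of "{0,1}"] simp: negligible_finite)
  then show "f integrable_on {0..1}" by blast
qed

lemma construct:
  fixes \<phi> x :: "real \<Rightarrow> real"
  assumes h1: "\<phi> ` {-2..-1} = {-10..10}" and h2: "\<phi> ` {-1..0} = {-10..10}" and h3: "\<phi> 0 = 0"
    and xc: "continuous_on {-2..1} x" and x\<phi>: "\<forall>t\<in>{-2..0}. x t = \<phi> t" and n: "n \<ge> 1"
  shows "\<exists>y v. admissible \<phi> y v \<and> cost y v \<le> 1 + 1/(4*(real n)^2)"
proof -
  define S where "S t = sin (2*pi*real n*t)" for t
  define v where "v t = 1 + 2 * sgn (S t)" for t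
  define F where "F t = 2*t + ww n t" for t
  define y where "y t = (if t \<le> 0 then x t else F t)" for t
  have x0: "x 0 = 0" using x\<phi> h3 by auto
  have F0: "F 0 = 0" by (simp add: F_def ww_0)
  have F1: "F 1 = 2" by (simp add: F_def ww_1)
  have Fc: "continuous_on A F" for A unfolding F_def using ww_cont[OF n] by (intro continuous_intros) auto
  have Fd: "(F has_real_derivative 2 + sgn (S t)) (at t)" if "S t \<noteq> 0" for t
    unfolding F_def S_def using ww_deriv[OF n] that[unfolded S_def]
    by (auto intro!: derivative_eq_intros)
  have yF: "y t = F t" if "0 \<le> t" for t using that x0 F0 by (auto simp: y_def)
  have y\<phi>: "\<And>s. s \<in> {-2..0} \<Longrightarrow> y s = \<phi> s" using x\<phi> by (auto simp: y_def)
  have wb: "0 \<le> ww n t" "ww n t \<le> 1/(2*real n)" for t using ww_bounds[OF n] by auto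
  have half: "1/(2*real n) \<le> 1/2" using n by (simp add: field_simps)
  (* measurability of v *)
  have Sm: "S \<in> borel_measurable (lebesgue_on {0<..<1})"
    unfolding S_def by (intro continuous_imp_measurable_on_sets_lebesgue continuous_intros) auto
  have vm: "v \<in> borel_measurable (lebesgue_on {0<..<1})"
  proof -
    have "(\<lambda>s::real. 1 + 2 * sgn s) \<in> borel_measurable borel" by measurable
    from measurable_compose[OF Sm this] show ?thesis unfolding v_def by simp
  qed
  have vb: "-1 \<le> v t \<and> v t \<le> 3" for t unfolding v_def by (simp add: sgn_if)
  (* continuity *)
  have yc: "continuous_on {-2..1} y"
  proof -
    have "continuous_on {-2..0} y"
      using continuous_on_subset[OF xc, of "{-2..0}"] by (rule continuous_on_eq) (auto simp: y_def)
    moreover have "continuous_on {0..1} y"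
      using Fc[of "{0..1}"] by (rule continuous_on_eq) (auto simp: yF)
    ultimately have "continuous_on ({-2..0} \<union> {0..1}) y"
      by (intro continuous_on_closed_Un) auto
    moreover have "{-2..0} \<union> {0..1} = {-2..1::real}" by auto
    ultimately show ?thesis by simp
  qed
  (* Lipschitz *)
  have yl: "3-lipschitz_on {0<..<1} y"
  proof (rule lipschitz_onI)
    fix s t :: real assume "s \<in> {0<..<1}" "t \<in> {0<..<1}"
    then have "y s = 2 * s + ww n s" "y t = 2*t + ww n t" by (auto simp: y_def F_def)
    moreover have "\<bar>ww n s - ww n t\<bar> \<le> \<bar>s - t\<bar>" by (rule ww_lip[OF n])
    ultimately show "dist (y s) (y t) \<le> 3 * dist s t" by (auto simp: dist_real_def abs_le_iff abs_if split: if_splits)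
  qed simp
  (* derivative *)
  have yb: "\<bar>y s\<bar> \<le> 10" if "s \<in> {0..t}" "t \<le> 1" for s t
  proof -
    have "y s = 2 * s + ww n s" using that yF[of s] by (auto simp: F_def)
    then show ?thesis using wb[of s] half that by auto
  qed
  have yd: "AE t in lebesgue_on {0<..<1}.
        (y has_real_derivative (1/10 * Sup ((\<lambda>s. v t * y s) ` {t-2..t}))) (at t)"
  proof -
    have fin: "finite {t \<in> {0..1}. S t = 0}" unfolding S_def by (rule ww_zeros_finite[OF n])
    have "AE t in lebesgue. t \<in> {0<..<1} \<longrightarrow>
        (y has_real_derivative (1/10 * Sup ((\<lambda>s. v t * y s) ` {t-2..t}))) (at t)"
    proof (rule AE_I')
      show "{t \<in> {0..1}. S t = 0} \<in> null_sets lebesgue"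
        using fin negligible_finite negligible_iff_null_sets by blast
      show "{t \<in> space lebesgue. \<not> (t \<in> {0<..<1} \<longrightarrow>
        (y has_real_derivative (1/10 * Sup ((\<lambda>s. v t * y s) ` {t-2..t}))) (at t))}
         \<subseteq> {t \<in> {0..1}. S t = 0}"
      proof (rule subsetI, rule ccontr)
        fix t assume t: "t \<in> {t \<in> space lebesgue. \<not> (t \<in> {0<..<1} \<longrightarrow>
          (y has_real_derivative (1/10 * Sup ((\<lambda>s. v t * y s) ` {t-2..t}))) (at t))}"
          and nz: "t \<notin> {t \<in> {0..1}. S t = 0}"
        have t01: "t \<in> {0<..<1}" using t by auto
        then have St: "S t \<noteq> 0" using nz by auto
        have sup: "Sup ((\<lambda>s. v t * y s) ` {t-2..t}) = 10 * \<bar>v t\<bar>"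
          by (rule sup_lemma[OF h1 h2 y\<phi>]) (use t01 yb in auto)
        have eq: "1/10 * Sup ((\<lambda>s. v t * y s) ` {t-2..t}) = 2 + sgn (S t)"
          using St sup by (auto simp: v_def sgn_if)
        have dd: "(y has_real_derivative 2 + sgn (S t)) (at t)"
          by (rule has_field_derivative_transform_within_open[OF Fd[OF St], of "{0<..}"])
             (use t01 yF in auto)
        have "\<not> (y has_real_derivative (1/10 * Sup ((\<lambda>s. v t * y s) ` {t-2..t}))) (at t)"
          using t t01 by blast
        then show False using dd unfolding eq by blast
      qed
    qed
    then show ?thesis by (subst AE_restrict_space_iff) auto
  qed
  have adm: "admissible \<phi> y v"
    unfolding admissible_def
  proof (intro conjI)
    show "v \<in> borel_measurable (lebesgue_on {0<..<1})" by (rule vm)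
    show "AE t in lebesgue_on {0<..<1}. - 1 \<le> v t \<and> v t \<le> 3" using vb by simp
    show "continuous_on {-2..1} y" by (rule yc)
    show "\<exists>L. L-lipschitz_on {0<..<1} y" using yl by blast
    show "AE t in lebesgue_on {0<..<1}.
        (y has_real_derivative (1/10 * Sup ((\<lambda>s. v t * y s) ` {t-2..t}))) (at t)" by (rule yd)
    show "\<forall>t\<in>{-2..0}. y t = \<phi> t" using x\<phi> by (auto simp: y_def)
  qed
  (* cost *)
  have fin: "finite {t \<in> {0..1}. S t = 0}" unfolding S_def by (rule ww_zeros_finite[OF n])
  have vI: "(v has_integral 1) {0..1}"
  proof -
    have I: "((\<lambda>t. 2 + sgn (S t)) has_integral F 1 - F 0) {0..1}"
    proof (rule fundamental_theorem_of_calculus_strong[OF fin])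
      fix t assume "t \<in> {0..1} - {t \<in> {0..1}. S t = 0}"
      then have "S t \<noteq> 0" by auto
      then show "(F has_vector_derivative 2 + sgn (S t)) (at t)"
        using Fd has_real_derivative_iff_has_vector_derivative by blast
    qed (auto intro: Fc)
    then have "((\<lambda>t. 2 * (2 + sgn (S t))) has_integral 2 * 2) {0..1}"
      using F0 F1 has_integral_mult_right[OF I, of 2] by simp
    moreover have "((\<lambda>t::real. 3::real) has_integral 3) {0..1}"
      using has_integral_const_real[of "3::real" 0 1] by simp
    ultimately have "((\<lambda>t. 2 * (2 + sgn (S t)) - 3) has_integral 2 * 2 - 3) {0..1}"
      by (rule has_integral_diff)
    moreover have "(\<lambda>t. 2 * (2 + sgn (S t)) - 3) = v" by (auto simp: v_def)
    ultimately show ?thesis by simp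
  qed
  define g where "g t = \<bar>y t - 2 * t\<bar>^2 + v t" for t
  have ycm: "y \<in> borel_measurable (lebesgue_on {0<..<1})"
    by (rule continuous_imp_measurable_on_sets_lebesgue[OF continuous_on_subset[OF yc]]) auto
  have gm: "g \<in> borel_measurable (lebesgue_on {0<..<1})"
  proof -
    have idm: "(\<lambda>x::real. x) \<in> borel_measurable (lebesgue_on {0<..<1})"
      by (rule continuous_imp_measurable_on_sets_lebesgue[OF continuous_on_id]) auto
    note [measurable] = ycm vm idm
    show ?thesis unfolding g_def by measurable
  qed
  have gF: "g t = (ww n t)^2 + v t" if "0 \<le> t" for t
    using yF[OF that] wb[of t] by (simp add: g_def F_def)
  have sq: "(ww n t)^2 \<le> 1/(4*(real n)^2)" for t
  proof -
    have "(ww n t)^2 \<le> (1/(2*real n))^2" using wb[of t] by (intro power_mono) auto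
    then show ?thesis by (simp add: power2_eq_square)
  qed
  have gb: "\<bar>g t\<bar> \<le> 4" if "t \<in> {0<..<1}" for t
  proof -
    have "(ww n t)^2 \<le> 1" using sq[of t] n
      by (smt (verit) divide_le_eq_1 of_nat_1 of_nat_le_iff one_le_power zero_le_power2 mult_le_cancel_left1)
    moreover have "0 \<le> (ww n t)^2" by simp
    moreover have "g t = (ww n t)^2 + v t" using gF that by auto
    ultimately show ?thesis using vb[of t] unfolding abs_le_iff by linarith
  qed
  have gL: "integral\<^sup>L (lebesgue_on {0<..<1}) g = integral {0..1} g"
    using LI[OF gm gb] by blast
  have wi: "(\<lambda>t. (ww n t)^2) integrable_on {0..1}"
    by (intro integrable_continuous_real continuous_intros ww_cont[OF n])
  have e1: "integral {0..1} g = integral {0..1} (\<lambda>t. (ww n t)^2 + v t)"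
    by (rule integral_cong) (auto simp: gF)
  have e2: "integral {0..1} (\<lambda>t. (ww n t)^2 + v t) = integral {0..1} (\<lambda>t. (ww n t)^2) + integral {0..1} v"
    by (rule integral_add[OF wi has_integral_integrable[OF vI]])
  have e3: "integral {0..1} v = 1" by (rule integral_unique[OF vI])
  have e4: "integral {0..1} (\<lambda>t. (ww n t)^2) \<le> integral {0..1} (\<lambda>t::real. 1/(4*(real n)^2))"
    by (rule Henstock_Kurzweil_Integration.integral_le) (use wi sq in auto)
  have e5: "integral {0..1} (\<lambda>t::real. 1/(4*(real n)^2)) = 1/(4*(real n)^2)" by simp
  have "integral {0..1} g \<le> 1/(4*(real n)^2) + 1" using e1 e2 e3 e4 e5 by linarith
  moreover have "y 1 = 2" using yF[of 1] F1 by simp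
  moreover have geq: "(\<lambda>t. \<bar>y t - 2 * t\<bar>^2 + v t) = g" by (rule ext) (simp only: g_def)
  ultimately have "cost y v \<le> 1 + 1/(4*(real n)^2)"
    unfolding cost_def geq using gL by simp
  then show ?thesis using adm by blast
qed

lemma lower_bound:
  fixes \<phi> x u :: "real \<Rightarrow> real"
  assumes h1: "\<phi> ` {-2..-1} = {-10..10}" and h2: "\<phi> ` {-1..0} = {-10..10}" and h3: "\<phi> 0 = 0"
    and adm: "admissible \<phi> x u"
  shows "cost x u > 1"
proof -
  have um: "u \<in> borel_measurable (lebesgue_on {0<..<1})"
    and ub: "AE t in lebesgue_on {0<..<1}. -1 \<le> u t \<and> u t \<le> 3"
    and xc: "continuous_on {-2..1} x"
    and xl: "\<exists>L. L-lipschitz_on {0<..<1} x"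
    and xd: "AE t in lebesgue_on {0<..<1}.
        (x has_real_derivative (1/10 * Sup ((\<lambda>s. u t * x s) ` {t-2..t}))) (at t)"
    and x\<phi>: "\<forall>t\<in>{-2..0}. x t = \<phi> t"
    using adm unfolding admissible_def by blast+
  obtain K where K: "K-lipschitz_on {0<..<1} x" using xl by blast
  define D where "D t = 1/10 * Sup ((\<lambda>s. u t * x s) ` {t-2..t})" for t
  have x0: "x 0 = 0" using x\<phi> h3 by auto
  have x\<phi>': "\<And>s. s \<in> {-2..0} \<Longrightarrow> x s = \<phi> s" using x\<phi> by auto
  have "AE t in lebesgue_on {0<..<1}. (-1 \<le> u t \<and> u t \<le> 3) \<and> (x has_real_derivative D t) (at t)"
    using ub xd unfolding D_def by eventually_elim auto
  then have "AE t in lebesgue. t \<in> {0<..<1} \<longrightarrow> (-1 \<le> u t \<and> u t \<le> 3) \<and> (x has_real_derivative D t) (at t)"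
    by (subst (asm) AE_restrict_space_iff) auto
  then obtain N where N: "{t \<in> space lebesgue. \<not> (t \<in> {0<..<1} \<longrightarrow> (-1 \<le> u t \<and> u t \<le> 3) \<and> (x has_real_derivative D t) (at t))} \<subseteq> N"
      "emeasure lebesgue N = 0" "N \<in> sets lebesgue"
    by (rule AE_E)
  have negN: "negligible N" using N(2,3) negligible_iff_null_sets null_setsI by blast
  define G where "G = {0<..<1} - N"
  have Gm: "G \<in> sets lebesgue" unfolding G_def using N(3) by auto
  have GP: "-1 \<le> u t \<and> u t \<le> 3" "(x has_real_derivative D t) (at t)" if "t \<in> G" for t
    using N(1) that unfolding G_def by auto
  have G01: "G \<subseteq> {0<..<1}" unfolding G_def by auto
  have spike: "integral G f = integral {0..1} f" for f :: "real \<Rightarrow> real"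
  proof (rule integral_spike_set)
    have "{x \<in> G - {0..1}. f x \<noteq> 0} = {}" using G01 by auto
    then show "negligible {x \<in> G - {0..1}. f x \<noteq> 0}" by (metis negligible_empty)
    show "negligible {x \<in> {0..1} - G. f x \<noteq> 0}"
      by (rule negligible_subset[of "N \<union> {0,1}"]) (use negN in \<open>auto simp: G_def negligible_finite\<close>)
  qed
  have Gsub: "G \<inter> {a<..<s} \<in> sets lebesgue" for a s using Gm by auto
  have uim: "(\<lambda>t. \<bar>u t\<bar>) integrable_on (G \<inter> {a<..<s})" for a s
  proof (rule measurable_bounded_by_integrable_imp_integrable_real)
    have "u \<in> borel_measurable (lebesgue_on (G \<inter> {a<..<s}))"
      using measurable_restrict_mono[OF um] G01 by blast
    then show "(\<lambda>t. \<bar>u t\<bar>) \<in> borel_measurable (lebesgue_on (G \<inter> {a<..<s}))" by measurable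
    show "G \<inter> {a<..<s} \<in> sets lebesgue" by (rule Gsub)
    have "G \<inter> {a<..<s} \<in> lmeasurable"
      by (rule bounded_set_imp_lmeasurable[OF _ Gsub]) (use G01 in \<open>auto intro: bounded_subset[of "{0..1}"]\<close>)
    then show "(\<lambda>t. 3::real) integrable_on (G \<inter> {a<..<s})" by (rule integrable_on_const)
    fix t assume "t \<in> G \<inter> {a<..<s}"
    then show "\<bar>\<bar>u t\<bar>\<bar> \<le> 3" using GP(1)[of t] by auto
  qed
  have ui3: "integral (G \<inter> {a<..<s}) (\<lambda>t. \<bar>u t\<bar>) \<le> 3 * (s - a)" if "a \<le> s" for a s
  proof -
    have lm: "G \<inter> {a<..<s} \<in> lmeasurable"
      by (rule bounded_set_imp_lmeasurable[OF _ Gsub]) (use G01 in \<open>auto intro: bounded_subset[of "{0..1}"]\<close>)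
    have "integral (G \<inter> {a<..<s}) (\<lambda>t. \<bar>u t\<bar>) \<le> integral (G \<inter> {a<..<s}) (\<lambda>t. 3)"
      by (rule Henstock_Kurzweil_Integration.integral_le[OF uim integrable_on_const[OF lm]])
         (use GP(1) in \<open>fastforce simp: abs_le_iff\<close>)
    also have "\<dots> = 3 * measure lebesgue (G \<inter> {a<..<s})"
      using lmeasure_integral[OF lm] integral_mult_right[where c=3 and S="G \<inter> {a<..<s}" and f="\<lambda>x::real. 1::real"] by simp
    also have "measure lebesgue (G \<inter> {a<..<s}) \<le> measure lebesgue {a..s}"
      by (rule measure_mono_fmeasurable) (use Gsub in auto)
    also have "measure lebesgue {a..s} = s - a" using that by (simp add: lmeasure_integral)
    finally show ?thesis by simp
  qed
  have key: "\<bar>x s - x a\<bar> \<le> integral (G \<inter> {a<..<s}) (\<lambda>t. \<bar>u t\<bar>)"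
    if as: "0 \<le> a" "a \<le> s" "s \<le> 1" and xb: "\<And>r. r \<in> {0..s} \<Longrightarrow> \<bar>x r\<bar> \<le> 10" for a s
  proof -
  have "\<bar>x s - x a\<bar> \<le> integral (G \<inter> {a<..<s}) (\<lambda>t. \<bar>\<bar>u t\<bar>\<bar>)"
  proof (rule abs_incr_bound[where f=x and a=a and b=s and K=K and d="\<lambda>t. \<bar>u t\<bar>" and G="G \<inter> {a<..<s}"])
    show "a \<le> s" by fact
    show "continuous_on {a..s} x" by (rule continuous_on_subset[OF xc]) (use as in auto)
    show "K-lipschitz_on {a<..<s} x" by (rule lipschitz_on_subset[OF K]) (use as in auto)
    show "G \<inter> {a<..<s} \<in> sets lebesgue" by (rule Gsub)
    show "G \<inter> {a<..<s} \<subseteq> {a<..<s}" by auto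
    show "negligible ({a<..<s} - G \<inter> {a<..<s})"
      by (rule negligible_subset[OF negN]) (use as in \<open>auto simp: G_def\<close>)
    show "(\<lambda>t. \<bar>\<bar>u t\<bar>\<bar>) integrable_on G \<inter> {a<..<s}" using uim by simp
    fix t assume t: "t \<in> G \<inter> {a<..<s}"
    have "Sup ((\<lambda>s. u t * x s) ` {t-2..t}) = 10 * \<bar>u t\<bar>"
      by (rule sup_lemma[OF h1 h2 x\<phi>']) (use t as xb G01 in auto)
    then have "D t = \<bar>u t\<bar>" by (simp add: D_def)
    then show "(x has_real_derivative \<bar>u t\<bar>) (at t)" using GP(2)[of t] t by auto
  qed
  then show ?thesis by simp
  qed
  have Abound: "\<forall>r\<in>{0..1}. \<bar>x r\<bar> \<le> 3 * r"
  proof -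
    define A where "A = {s\<in>{0..1}. \<forall>r\<in>{0..s}. \<bar>x r\<bar> \<le> 3 * r}"
    have A0: "0 \<in> A" using x0 by (auto simp: A_def)
    have Abdd: "bdd_above A" unfolding A_def bdd_above_def by (rule exI[of _ 1]) auto
    have Ane: "A \<noteq> {}" using A0 by blast
    define t0 where "t0 = Sup A"
    have t0ge: "0 \<le> t0" unfolding t0_def by (rule cSup_upper[OF A0 Abdd])
    have t0le: "t0 \<le> 1" unfolding t0_def by (rule cSup_least[OF Ane]) (auto simp: A_def)
    have below: "\<bar>x r\<bar> \<le> 3 * r" if r0: "0 \<le> r" "r < t0" for r
    proof -
      obtain s where "s \<in> A" "r < s" using less_cSup_iff[OF Ane Abdd, of r] r0 unfolding t0_def by blast
      then show ?thesis using r0 by (auto simp: A_def)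
    qed
    have Cc: "closed {r \<in> {0..1}. \<bar>x r\<bar> \<le> 3 * r}"
    proof (rule continuous_on_closed_Collect_le)
      show "continuous_on {0..1} (\<lambda>r. \<bar>x r\<bar>)"
        by (intro continuous_intros continuous_on_subset[OF xc]) auto
    qed (auto intro: continuous_intros)
    have at: "\<bar>x t0\<bar> \<le> 3 * t0"
    proof (cases "t0 = 0")
      case True then show ?thesis using x0 by simp
    next
      case False
      then have "0 < t0" using t0ge by simp
      have "{0..<t0} \<subseteq> {r \<in> {0..1}. \<bar>x r\<bar> \<le> 3 * r}" using below t0le by auto
      then have "closure {0..<t0} \<subseteq> {r \<in> {0..1}. \<bar>x r\<bar> \<le> 3 * r}"
        by (rule closure_minimal[OF _ Cc])
      then show ?thesis using closure_atLeastLessThan[OF \<open>0 < t0\<close>] t0ge by auto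
    qed
    have t0A: "t0 \<in> A"
      unfolding A_def
    proof (intro CollectI conjI ballI)
      show "t0 \<in> {0..1}" using t0ge t0le by auto
      fix r assume r: "r \<in> {0..t0}"
      show "\<bar>x r\<bar> \<le> 3 * r"
      proof (cases "r < t0")
        case True then show ?thesis using below r by auto
      next
        case False then have "r = t0" using r by auto
        then show ?thesis using at by simp
      qed
    qed
    have "t0 = 1"
    proof (rule ccontr)
      assume "t0 \<noteq> 1"
      then have lt: "t0 < 1" using t0le by simp
      have "t0 \<in> {-2..1}" using t0ge t0le by auto
      then obtain \<delta> where \<delta>: "\<delta> > 0" "\<And>r. r \<in> {-2..1} \<Longrightarrow> dist r t0 < \<delta> \<Longrightarrow> dist (x r) (x t0) < 1"
        using xc unfolding continuous_on_iff by (metis zero_less_one)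
      define s where "s = min 1 (t0 + \<delta>/2)"
      have s: "t0 < s" "s \<le> 1" using lt \<delta>(1) by (auto simp: s_def)
      have xb: "\<bar>x r\<bar> \<le> 10" if "r \<in> {0..s}" for r
      proof (cases "r \<le> t0")
        case True then have "\<bar>x r\<bar> \<le> 3 * r" using t0A that by (auto simp: A_def)
        then show ?thesis using True t0le by auto
      next
        case False
        then have "dist r t0 < \<delta>" using that \<delta>(1) by (auto simp: s_def dist_real_def)
        then have "dist (x r) (x t0) < 1" using \<delta>(2)[of r] that s by auto
        then show ?thesis using at t0le by (auto simp: dist_real_def)
      qed
      have "s \<in> A"
        unfolding A_def
      proof (intro CollectI conjI ballI)
        show "s \<in> {0..1}" using s t0ge by auto
        fix r assume r: "r \<in> {0..s}"
        show "\<bar>x r\<bar> \<le> 3 * r"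
        proof (cases "r \<le> t0")
          case True then show ?thesis using t0A r by (auto simp: A_def)
        next
          case False
          have "\<bar>x r - x t0\<bar> \<le> integral (G \<inter> {t0<..<r}) (\<lambda>t. \<bar>u t\<bar>)"
            by (rule key) (use t0ge False r s xb in auto)
          also have "\<dots> \<le> 3 * (r - t0)" by (rule ui3) (use False in auto)
          finally show ?thesis using at by (simp add: abs_le_iff)
        qed
      qed
      then have "s \<le> t0" unfolding t0_def by (rule cSup_upper[OF _ Abdd])
      then show False using s by simp
    qed
    then show ?thesis using t0A by (auto simp: A_def)
  qed
  have Ab10: "\<bar>x r\<bar> \<le> 10" if r: "r \<in> {0..1}" for r
  proof -
    have "\<bar>x r\<bar> \<le> 3 * r" using Abound r by blast
    then show ?thesis using r by auto
  qed
  have Dval: "D t = \<bar>u t\<bar>" if t: "t \<in> G" for t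
  proof -
    have "Sup ((\<lambda>s. u t * x s) ` {t-2..t}) = 10 * \<bar>u t\<bar>"
    proof (rule sup_lemma[OF h1 h2 x\<phi>'])
      show "0 \<le> t" "t \<le> 1" using t G01 by auto
      fix r assume r: "r \<in> {0..t}"
      have "t < 1" using t G01 by auto
      then have "r \<in> {0..1}" using r by auto
      then have "\<bar>x r\<bar> \<le> 3 * r" using Abound by blast
      then show "\<bar>x r\<bar> \<le> 10" using r \<open>t < 1\<close> by auto
    qed
    then show ?thesis by (simp add: D_def)
  qed
  have GG: "G \<inter> {0<..<1} = G" using G01 by auto
  have spikei: "f integrable_on G \<longleftrightarrow> f integrable_on {0..1}" for f :: "real \<Rightarrow> real"
    by (rule integrable_spike_set_eq)
       (rule negligible_subset[of "N \<union> {0,1}"], use negN in \<open>auto simp: G_def negligible_finite\<close>)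
  have B1: "x 1 \<le> integral G (\<lambda>t. \<bar>u t\<bar>)"
  proof -
    have "\<bar>x 1 - x 0\<bar> \<le> integral (G \<inter> {0<..<1}) (\<lambda>t. \<bar>u t\<bar>)"
      by (rule key) (use Ab10 in \<open>auto\<close>)
    then show ?thesis using x0 GG by simp
  qed
  define uc where "uc t = max (-1) (min 3 (u t))" for t
  have ucm: "uc \<in> borel_measurable (lebesgue_on {0<..<1})"
    unfolding uc_def using um by measurable
  have ucb: "\<bar>uc t\<bar> \<le> 3" for t by (auto simp: uc_def)
  have ucG: "uc t = u t" if "t \<in> G" for t using GP(1)[OF that] by (auto simp: uc_def)
  note LIuc = LI[OF ucm ucb]
  define Iu where "Iu = integral {0..1} uc"
  have ucI: "(uc has_integral Iu) {0..1}" using LIuc(3) unfolding Iu_def by blast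
  have hI: "((\<lambda>t. (uc t + 3) / 2) has_integral (Iu + 3) / 2) {0..1}"
  proof -
    have "((\<lambda>t::real. 3::real) has_integral 3) {0..1}"
      using has_integral_const_real[of "3::real" 0 1] by simp
    from has_integral_add[OF ucI this] show ?thesis by (rule has_integral_divide)
  qed
  have B2: "integral G (\<lambda>t. \<bar>u t\<bar>) \<le> integral G (\<lambda>t. (uc t + 3) / 2)"
  proof (rule Henstock_Kurzweil_Integration.integral_le)
    show "(\<lambda>t. \<bar>u t\<bar>) integrable_on G" using uim[of 0 1] GG by simp
    show "(\<lambda>t. (uc t + 3) / 2) integrable_on G" using spikei hI by blast
    fix t assume t: "t \<in> G"
    show "\<bar>u t\<bar> \<le> (uc t + 3) / 2" using GP(1)[OF t] ucG[OF t] by auto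
  qed
  have B3: "integral G (\<lambda>t. (uc t + 3) / 2) = (Iu + 3) / 2"
    using spike integral_unique[OF hI] by simp
  have "x 1 \<le> (Iu + 3) / 2" using order_trans[OF B1 B2] B3 by simp
  then have IuB: "2 * x 1 - 3 \<le> Iu" by simp
  define sq where "sq t = \<bar>x t - 2 * t\<bar>^2" for t
  have sqc: "continuous_on {0..1} sq"
    unfolding sq_def by (intro continuous_intros continuous_on_subset[OF xc]) auto
  have sqi: "sq integrable_on {0..1}" by (rule integrable_continuous_real[OF sqc])
  define Isq where "Isq = integral {0..1} sq"
  have Isq0: "0 \<le> Isq" unfolding Isq_def by (rule integral_nonneg[OF sqi]) (simp add: sq_def)
  have xm: "x \<in> borel_measurable (lebesgue_on {0<..<1})"
    by (rule continuous_imp_measurable_on_sets_lebesgue[OF continuous_on_subset[OF xc]]) auto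
  have idm: "(\<lambda>x::real. x) \<in> borel_measurable (lebesgue_on {0<..<1})"
    by (rule continuous_imp_measurable_on_sets_lebesgue[OF continuous_on_id]) auto
  note [measurable] = xm idm um ucm
  have "integral\<^sup>L (lebesgue_on {0<..<1}) (\<lambda>t. \<bar>x t - 2 * t\<bar>^2 + u t)
      = integral\<^sup>L (lebesgue_on {0<..<1}) (\<lambda>t. sq t + uc t)"
  proof (rule integral_cong_AE)
    show "(\<lambda>t. \<bar>x t - 2 * t\<bar>^2 + u t) \<in> borel_measurable (lebesgue_on {0<..<1})" by measurable
    show "(\<lambda>t. sq t + uc t) \<in> borel_measurable (lebesgue_on {0<..<1})" unfolding sq_def by measurable
    show "AE t in lebesgue_on {0<..<1}. \<bar>x t - 2 * t\<bar>^2 + u t = sq t + uc t"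
      using ub by eventually_elim (auto simp: sq_def uc_def)
  qed
  also have "\<dots> = integral {0..1} (\<lambda>t. sq t + uc t)"
  proof (rule LI(2))
    show "(\<lambda>t. sq t + uc t) \<in> borel_measurable (lebesgue_on {0<..<1})" unfolding sq_def by measurable
    fix t :: real assume t: "t \<in> {0<..<1}"
    have "t \<in> {0..1}" using t by auto
    then have "\<bar>x t\<bar> \<le> 3 * t" using Abound by blast
    then have "\<bar>x t\<bar> \<le> 3" using t by auto
    then have "\<bar>x t - 2 * t\<bar> \<le> 5" using t by auto
    then have "sq t \<le> 5^2" unfolding sq_def by (intro power_mono) auto
    moreover have "0 \<le> sq t" by (simp add: sq_def)
    ultimately show "\<bar>sq t + uc t\<bar> \<le> 28" using ucb[of t] by (simp add: abs_le_iff)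
  qed
  also have "\<dots> = Isq + Iu" unfolding Isq_def Iu_def
    by (rule integral_add[OF sqi LIuc(3)])
  finally have costeq: "cost x u = Isq + Iu + 4 * \<bar>x 1 - 2\<bar>" unfolding cost_def by simp
  have ge: "cost x u \<ge> Isq + 1" using costeq IuB by (simp add: abs_if)
  show ?thesis
  proof (cases "Isq > 0")
    case True then show ?thesis using ge by simp
  next
    case False
    then have "Isq = 0" using Isq0 by simp
    then have sqI: "(sq has_integral 0) (cbox 0 1)"
      using integrable_integral[OF sqi] unfolding Isq_def by (simp add: cbox_interval)
    have xeq: "x r = 2 * r" if "r \<in> {0..1}" for r
    proof -
      have "sq r = 0"
        by (rule has_integral_0_cbox_imp_0[OF _ _ sqI]) (use sqc that in \<open>auto simp: cbox_interval sq_def box_real\<close>)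
      then show ?thesis by (simp add: sq_def)
    qed
    have u2: "uc t = 2" if t: "t \<in> G" for t
    proof -
      have d2: "(x has_real_derivative 2) (at t)"
      proof (rule has_field_derivative_transform_within_open[of "\<lambda>r. 2 * r" 2 t "{0<..<1}"])
        show "((\<lambda>r. 2 * r) has_real_derivative 2) (at t)" by (auto intro!: derivative_eq_intros)
      qed (use t G01 xeq in auto)
      have "D t = 2" using DERIV_unique[OF GP(2)[OF t] d2] .
      then have "\<bar>u t\<bar> = 2" using Dval[OF t] by simp
      then show ?thesis using GP(1)[OF t] ucG[OF t] by auto
    qed
    have "Iu = integral G uc" unfolding Iu_def using spike by simp
    also have "\<dots> = integral G (\<lambda>t. 2)" by (rule integral_cong) (use u2 in auto)
    also have "\<dots> = 2" using spike[of "\<lambda>t. 2"] by simp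
    finally have "Iu = 2" .
    moreover have "x 1 = 2" using xeq[of 1] by simp
    ultimately show ?thesis using costeq \<open>Isq = 0\<close> by simp
  qed
qed

theorem theorem3p5:
  fixes \<phi> :: "real \<Rightarrow> real"
  assumes "\<phi> ` {-2..-1} = {-10..10}"
      and "\<phi> ` {-1..0} = {-10..10}"
      and "\<phi> 0 = 0"
  shows "\<not> (\<exists>x u. admissible \<phi> x u \<and> (\<forall>y v. admissible \<phi> y v \<longrightarrow> cost x u \<le> cost y v))"
proof
  assume "\<exists>x u. admissible \<phi> x u \<and> (\<forall>y v. admissible \<phi> y v \<longrightarrow> cost x u \<le> cost y v)"
  then obtain x u where adm: "admissible \<phi> x u"
    and opt: "\<And>y v. admissible \<phi> y v \<Longrightarrow> cost x u \<le> cost y v" by blast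
  have c1: "cost x u > 1" by (rule lower_bound[OF assms adm])
  have xc: "continuous_on {-2..1} x" and x\<phi>: "\<forall>t\<in>{-2..0}. x t = \<phi> t"
    using adm unfolding admissible_def by blast+
  obtain n :: nat where nn: "1 / (cost x u - 1) < real n" using reals_Archimedean2 by blast
  have npos: "0 < real n" using nn c1 by (smt (verit) divide_pos_pos)
  then have n1: "n \<ge> 1" by simp
  have "1 < real n * (cost x u - 1)" using nn c1 by (simp add: field_simps)
  then have lt: "1 / real n < cost x u - 1" using npos by (simp add: field_simps)
  have "1 / (4 * (real n)^2) \<le> 1 / real n"
    using n1 npos by (simp add: field_simps power2_eq_square)
  with lt have small: "1 + 1 / (4 * (real n)^2) < cost x u" by linarith
  obtain y v where yv: "admissible \<phi> y v" "cost y v \<le> 1 + 1/(4*(real n)^2)"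
    using construct[OF assms xc x\<phi> n1] by blast
  have "cost x u \<le> cost y v" by (rule opt[OF yv(1)])
  then show False using yv(2) small by linarith
qed

end
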